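(* For every positive integer $n$, $n\mathcal{L} \subseteq \mathcal{L}_n$ and $n\mathcal{M} \subseteq \mathcal{M}_n$, where $n\mathcal{L} = \{n\alpha : \alpha\in\mathcal{L}\}$ and $n\mathcal{M}=\{n\alpha:\alpha\in\mathcal{M}\}$.
   Context: For an irrational real $\xi$ and positive integer $n$, $\lambda_n(\xi) = \limsup_{s/t \to \xi} \dfrac{\gcd(t,n)}{t^2 \left| \frac{s}{t} - \xi\right|}$ (limsup over rationals $s/t$, $t>0$, tending to $\xi$), and $\mathcal{L}_n = \{\lambda_n(\xi)\in\mathbb{R} : \xi\in\mathbb{R}\setminus\mathbb{Q}\}$. For reals $\xi\ne\xi'$, $\mu_n(\xi,\xi') = \sup_{(s,t)\in\mathbb{Z}^2\setminus\{0\}} \dfrac{\gcd(t,n)\,|\xi-\xi'|}{|s-t\xi|\,|s-t\xi'|}$ (with $\gcd(0,n)=n$), and $\mathcal{M}_n$ is the set of finite values of $\mu_n(\xi,\xi')$ over pairs of reals $\xi\neq\xi'$. The classical Lagrange and Markoff spectra are $\mathcal{L}=\mathcal{L}_1$ and $\mathcal{M}=\mathcal{M}_1$. *)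

theory Defs
  imports "HOL-Analysis.Analysis" "HOL-Library.Liminf_Limsup"
begin

definition lag_quot :: "nat \<Rightarrow> real \<Rightarrow> rat \<Rightarrow> ereal" where
  "lag_quot n xi q = (case quotient_of q of (s, t) \<Rightarrow>
     ereal (real_of_int (gcd t (int n)) / ((real_of_int t)\<^sup>2 * \<bar>real_of_rat q - xi\<bar>)))"

definition lambda_n :: "nat \<Rightarrow> real \<Rightarrow> ereal" where
  "lambda_n n xi = Limsup (filtercomap real_of_rat (at xi)) (lag_quot n xi)"

definition lagrange_spectrum_n :: "nat \<Rightarrow> real set" where
  "lagrange_spectrum_n n =
     {real_of_ereal (lambda_n n xi) | xi. xi \<notin> \<rat> \<and> \<bar>lambda_n n xi\<bar> \<noteq> \<infinity>}"

definition mark_quot :: "nat \<Rightarrow> real \<Rightarrow> real \<Rightarrow> int \<times> int \<Rightarrow> ereal" where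
  "mark_quot n xi xi' p = (case p of (s, t) \<Rightarrow>
     (if (real_of_int s - real_of_int t * xi) * (real_of_int s - real_of_int t * xi') = 0
      then \<infinity>
      else ereal (real_of_int (gcd t (int n)) * \<bar>xi - xi'\<bar> /
                  (\<bar>real_of_int s - real_of_int t * xi\<bar> * \<bar>real_of_int s - real_of_int t * xi'\<bar>))))"

definition mu_n :: "nat \<Rightarrow> real \<Rightarrow> real \<Rightarrow> ereal" where
  "mu_n n xi xi' = (SUP p \<in> UNIV - {(0, 0)}. mark_quot n xi xi' p)"

definition markoff_spectrum_n :: "nat \<Rightarrow> real set" where
  "markoff_spectrum_n n =
     {real_of_ereal (mu_n n xi xi') | xi xi'. xi \<noteq> xi' \<and> \<bar>mu_n n xi xi'\<bar> \<noteq> \<infinity>}"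

end

theory Submission
  imports Defs
begin

lemma irr_ne:
  fixes x :: real
  assumes "x \<notin> \<rat>" "(a, b) \<noteq> ((0::int), (0::int))"
  shows "of_int a - of_int b * x \<noteq> 0"
proof
  assume h: "of_int a - of_int b * x = 0"
  show False
  proof (cases "b = 0")
    case True thus False using h assms(2) by simp
  next
    case False
    hence "x = of_int a / of_int b" using h by (simp add: field_simps)
    thus False using assms(1) by simp
  qed
qed

lemma lin_identity:
  fixes P Q R U s t x :: real
  assumes "R * x + U \<noteq> 0"
  shows "s - t * ((P * x + Q) / (R * x + U)) = ((U * s - Q * t) - (P * t - R * s) * x) / (R * x + U)"
  using assms by (simp add: field_simps)

lemma zdiff:
  fixes P Q R U x x' :: real
  assumes "R * x + U \<noteq> 0" "R * x' + U \<noteq> 0"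
  shows "(P * x + Q) / (R * x + U) - (P * x' + Q) / (R * x' + U)
       = (P * U - Q * R) * (x - x') / ((R * x + U) * (R * x' + U))"
  using assms by (simp add: field_simps)

lemma quot_denom:
  assumes "b \<noteq> 0" "quotient_of (of_int a / of_int b) = (a', b')"
  shows "b' * gcd a b = \<bar>b\<bar>"
proof -
  have "quotient_of (Fract a b) = (a', b')" using assms(2) by (simp add: Fract_of_int_quotient)
  hence nz: "Rat.normalize (a, b) = (a', b')" by (simp add: quotient_of_Fract)
  obtain k where k: "b = gcd a b * k" by (metis dvd_def gcd_dvd2)
  have g0: "gcd a b > 0" using assms(1) by simp
  show ?thesis
  proof (cases "b > 0")
    case True
    hence "b' = b div gcd a b" using nz by (simp add: Rat.normalize_def Let_def)
    thus ?thesis using k g0 True by simp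
  next
    case False
    hence "b' = b div (- gcd a b)" using nz assms(1) by (simp add: Rat.normalize_def Let_def)
    moreover have "b div (- gcd a b) = - k"
    proof -
      have "b = (- gcd a b) * (- k)" using k by simp
      thus ?thesis using g0 by (metis nonzero_mult_div_cancel_left neg_0_equal_iff_equal less_irrefl)
    qed
    ultimately have "b' = - k" by simp
    moreover have "b < 0" using False assms(1) by simp
    ultimately show ?thesis using k by (simp add: mult.commute)
  qed
qed

definition Fr :: "real \<Rightarrow> real \<Rightarrow> int \<Rightarrow> int \<Rightarrow> real" where
  "Fr x x' a b = \<bar>x - x'\<bar> / (\<bar>of_int a - of_int b * x\<bar> * \<bar>of_int a - of_int b * x'\<bar>)"

lemma Fr_nonneg: "Fr x x' a b \<ge> 0"
  by (simp add: Fr_def)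

lemma mark_quot_eq:
  assumes "x \<notin> \<rat>" "x' \<notin> \<rat>" "(s, t) \<noteq> (0, 0)"
  shows "mark_quot m x x' (s, t) = ereal (of_int (gcd t (int m)) * Fr x x' s t)"
  using irr_ne[OF assms(1,3)] irr_ne[OF assms(2,3)] by (simp add: mark_quot_def Fr_def)

lemma Fr_scale:
  assumes "g \<noteq> 0"
  shows "Fr x x' (g * a) (g * b) = Fr x x' a b / (of_int g)\<^sup>2"
proof -
  have e1: "of_int (g * a) - of_int (g * b) * y = of_int g * (of_int a - of_int b * y)" for y :: real
    by (simp add: algebra_simps)
  show ?thesis using assms unfolding Fr_def e1 abs_mult
    by (simp add: power2_eq_square field_simps)
qed

lemma Fr_transform:
  fixes P Q R U s t :: int and x x' :: real
  assumes "of_int R * x + of_int U \<noteq> 0" "of_int R * x' + of_int U \<noteq> 0"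
  shows "Fr ((of_int P * x + of_int Q) / (of_int R * x + of_int U))
            ((of_int P * x' + of_int Q) / (of_int R * x' + of_int U)) s t
       = \<bar>of_int (P * U - Q * R)\<bar> * Fr x x' (U * s - Q * t) (P * t - R * s)"
proof -
  have l1: "of_int s - of_int t * ((of_int P * y + of_int Q) / (of_int R * y + of_int U))
      = (of_int (U * s - Q * t) - of_int (P * t - R * s) * y) / (of_int R * y + of_int U)"
    if "of_int R * y + of_int U \<noteq> 0" for y :: real
    using lin_identity[OF that, of s t P Q] by simp
  have l2: "(of_int P * x + of_int Q) / (of_int R * x + of_int U) - (of_int P * x' + of_int Q) / (of_int R * x' + of_int U)
     = of_int (P * U - Q * R) * (x - x') / ((of_int R * x + of_int U) * (of_int R * x' + of_int U))"
    using zdiff[OF assms, of P Q] by simp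
  have gen: "\<bar>N * d / (D * D')\<bar> / (\<bar>A / D\<bar> * \<bar>A' / D'\<bar>) = \<bar>N\<bar> * (\<bar>d\<bar> / (\<bar>A\<bar> * \<bar>A'\<bar>))"
    if "D \<noteq> 0" "D' \<noteq> 0" for N d D D' A A' :: real
    using that by (cases "A = 0"; cases "A' = 0") (auto simp: abs_mult abs_divide field_simps)
  show ?thesis
    unfolding Fr_def l1[OF assms(1)] l1[OF assms(2)] l2 gen[OF assms] by simp
qed

lemma zeta_irr:
  fixes P Q R U :: int and y :: real
  assumes "y \<notin> \<rat>" "of_int R * y + of_int U \<noteq> 0" "P * U - Q * R \<noteq> 0"
  shows "(of_int P * y + of_int Q) / (of_int R * y + of_int U) \<notin> \<rat>"
proof
  define z where "z = (of_int P * y + of_int Q) / (of_int R * y + of_int U)"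
  assume "z \<in> \<rat>"
  have e: "y * (of_int R * z - of_int P) = of_int Q - of_int U * z"
    using assms(2) unfolding z_def by (simp add: field_simps)
  show False
  proof (cases "of_int R * z - of_int P = (0::real)")
    case True
    hence "of_int Q - of_int U * z = (0::real)" using e by simp
    hence q: "of_int Q = of_int U * z" by simp
    have p: "of_int P = of_int R * z" using True by simp
    have "(of_int (P * U - Q * R) :: real) = of_int P * of_int U - of_int Q * of_int R" by simp
    also have "\<dots> = 0" unfolding p q by simp
    finally show False using assms(3) by linarith
  next
    case False
    hence "y = (of_int Q - of_int U * z) / (of_int R * z - of_int P)" using e by (simp add: field_simps)
    moreover have "(of_int Q - of_int U * z) / (of_int R * z - of_int P) \<in> \<rat>"
      using \<open>z \<in> \<rat>\<close> by (intro Rats_divide Rats_diff Rats_mult) auto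
    ultimately show False using assms(1) by simp
  qed
qed

lemma mu_rat1:
  assumes "x \<in> \<rat>" shows "mu_n m x x' = \<infinity>"
proof -
  obtain a b where ab: "b > 0" "x = of_int a / of_int b" using Rats_cases'[OF assms] by metis
  have "mark_quot m x x' (a, b) = \<infinity>" using ab by (simp add: mark_quot_def)
  moreover have "mark_quot m x x' (a, b) \<le> mu_n m x x'"
    unfolding mu_n_def using ab by (intro SUP_upper) auto
  ultimately show ?thesis by (simp add: top_unique[where 'a=ereal, simplified])
qed

lemma mu_rat2:
  assumes "x' \<in> \<rat>" shows "mu_n m x x' = \<infinity>"
proof -
  obtain a b where ab: "b > 0" "x' = of_int a / of_int b" using Rats_cases'[OF assms] by metis
  have "mark_quot m x x' (a, b) = \<infinity>" using ab by (simp add: mark_quot_def)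
  moreover have "mark_quot m x x' (a, b) \<le> mu_n m x x'"
    unfolding mu_n_def using ab by (intro SUP_upper) auto
  ultimately show ?thesis by (simp add: top_unique[where 'a=ereal, simplified])
qed

lemma mod_class_mem:
  assumes "n > 0"
  shows "(a mod int n, b mod int n) \<in> {0..<int n} \<times> {0..<int n}"
  using assms by auto

lemma markoff_class:
  assumes n: "n > 0" and F1: "\<And>a b. (a, b) \<noteq> (0, 0) \<Longrightarrow> Fr x x' a b \<le> \<alpha>"
    and sup: "\<And>Y. (\<And>a b. (a, b) \<noteq> (0::int, 0::int) \<Longrightarrow> Fr x x' a b \<le> Y) \<Longrightarrow> \<alpha> \<le> Y"
  shows "\<exists>c. \<forall>y<\<alpha>. \<exists>a b. coprime a b \<and> (a mod int n, b mod int n) = c \<and> y < Fr x x' a b"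
proof (rule ccontr)
  assume "\<not> ?thesis"
  hence "\<forall>c. \<exists>y<\<alpha>. \<forall>a b. coprime a b \<longrightarrow> (a mod int n, b mod int n) = c \<longrightarrow> Fr x x' a b \<le> y"
    by (meson not_less)
  then obtain yf where yf1: "\<And>c. yf c < \<alpha>"
    and yf2: "\<And>c a b. coprime a b \<Longrightarrow> (a mod int n, b mod int n) = c \<Longrightarrow> Fr x x' a b \<le> yf c"
    by metis
  define C where "C = {0..<int n} \<times> {0..<int n}"
  define Y where "Y = Max (yf ` C)"
  have finC: "finite C" unfolding C_def by simp
  have neC: "C \<noteq> {}" using n unfolding C_def by auto
  have "Y < \<alpha>" unfolding Y_def using finC neC yf1 by (subst Max_less_iff) auto
  have cop: "Fr x x' a b \<le> Y" if "coprime a b" for a b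
  proof -
    have "(a mod int n, b mod int n) \<in> C" unfolding C_def using mod_class_mem[OF n] .
    hence "yf (a mod int n, b mod int n) \<le> Y" unfolding Y_def using finC by (intro Max_ge) auto
    thus ?thesis using yf2[OF that refl] by linarith
  qed
  have all: "Fr x x' a b \<le> Y" if "(a, b) \<noteq> (0, 0)" for a b
  proof -
    have g: "gcd a b \<noteq> 0" using that by simp
    obtain a1 b1 where ab: "a = a1 * gcd a b" "b = b1 * gcd a b" "coprime a1 b1"
      using gcd_coprime_exists[OF g] by blast
    have "Fr x x' a b = Fr x x' a1 b1 / (of_int (gcd a b))\<^sup>2"
      using Fr_scale[OF g, of x x' a1 b1] ab by (simp add: mult.commute)
    also have "\<dots> \<le> Fr x x' a1 b1"
    proof -
      have "gcd a b \<ge> 1" using g by (simp add: int_one_le_iff_zero_less order_le_neq_trans)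
      hence "(1::real) \<le> of_int (gcd a b)" by simp
      hence g2: "(1::real) \<le> (of_int (gcd a b))\<^sup>2" by (rule one_le_power)
      have "Fr x x' a1 b1 / (of_int (gcd a b))\<^sup>2 \<le> Fr x x' a1 b1 / 1"
        using g2 Fr_nonneg[of x x' a1 b1] by (intro divide_left_mono) auto
      thus ?thesis by simp
    qed
    also have "\<dots> \<le> Y" using cop[OF ab(3)] .
    finally show ?thesis .
  qed
  have "\<alpha> \<le> Y" using sup all by blast
  thus False using \<open>Y < \<alpha>\<close> by simp
qed

lemma markoff_part:
  assumes n: "n > 0" and xx: "x \<noteq> x'" and fin: "\<bar>mu_n 1 x x'\<bar> \<noteq> \<infinity>"
  shows "real n * real_of_ereal (mu_n 1 x x') \<in> markoff_spectrum_n n"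
proof -
  define \<alpha> where "\<alpha> = real_of_ereal (mu_n 1 x x')"
  have mu: "mu_n 1 x x' = ereal \<alpha>" using fin unfolding \<alpha>_def by (cases "mu_n 1 x x'") auto
  have xi: "x \<notin> \<rat>" using mu mu_rat1 by force
  have xi': "x' \<notin> \<rat>" using mu mu_rat2 by force
  have mq1: "mark_quot 1 x x' (a, b) = ereal (Fr x x' a b)" if "(a, b) \<noteq> (0, 0)" for a b
    using mark_quot_eq[OF xi xi' that, of 1] by simp
  have F1: "Fr x x' a b \<le> \<alpha>" if "(a, b) \<noteq> (0, 0)" for a b
  proof -
    have "mark_quot 1 x x' (a, b) \<le> mu_n 1 x x'" unfolding mu_n_def using that by (intro SUP_upper) auto
    thus ?thesis using mq1[OF that] mu by simp
  qed
  have sup: "\<alpha> \<le> Y" if "\<And>a b. (a, b) \<noteq> (0::int, 0::int) \<Longrightarrow> Fr x x' a b \<le> Y" for Y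
  proof -
    have "mu_n 1 x x' \<le> ereal Y" unfolding mu_n_def
    proof (rule SUP_least)
      fix p :: "int \<times> int" assume "p \<in> UNIV - {(0, 0)}"
      then obtain a b where p: "p = (a, b)" "(a, b) \<noteq> (0, 0)" by (cases p) auto
      show "mark_quot 1 x x' p \<le> ereal Y" using p mq1 that by simp
    qed
    thus ?thesis using mu by simp
  qed
  obtain c where c: "\<forall>y<\<alpha>. \<exists>a b. coprime a b \<and> (a mod int n, b mod int n) = c \<and> y < Fr x x' a b"
    using markoff_class[OF n F1 sup] by blast
  obtain a0 b0 where ab0: "coprime a0 b0" "(a0 mod int n, b0 mod int n) = c"
    using c[rule_format, of "\<alpha> - 1"] by auto
  have "gcd b0 a0 = 1" using ab0(1) by (simp add: coprime_iff_gcd_eq_1 gcd.commute)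
  then obtain u' r' where bez: "u' * b0 + r' * a0 = 1"
    using bezout_int[of b0 a0] by auto
  define P where "P = b0"
  define Q where "Q = - a0"
  define R where "R = int n * r'"
  define U where "U = int n * u'"
  have det1: "P * u' - Q * r' = 1" using bez by (simp add: P_def Q_def algebra_simps)
  have det: "P * U - Q * R = int n"
  proof -
    have "P * U - Q * R = int n * (P * u' - Q * r')" by (simp add: U_def R_def algebra_simps)
    thus ?thesis using det1 by simp
  qed
  have UR: "(U, - R) \<noteq> (0, 0)"
  proof
    assume "(U, - R) = (0, 0)"
    hence "u' = 0" "r' = 0" using n by (auto simp: U_def R_def)
    thus False using det1 by simp
  qed
  have Dne: "of_int R * y + of_int U \<noteq> 0" if "y \<notin> \<rat>" for y :: real
    using irr_ne[OF that UR] by (simp add: algebra_simps)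
  define z where "z = (of_int P * x + of_int Q) / (of_int R * x + of_int U)"
  define z' where "z' = (of_int P * x' + of_int Q) / (of_int R * x' + of_int U)"
  have zi: "z \<notin> \<rat>" using zeta_irr[OF xi Dne[OF xi]] det n by (simp add: z_def)
  have zi': "z' \<notin> \<rat>" using zeta_irr[OF xi' Dne[OF xi']] det n by (simp add: z'_def)
  have zz: "z \<noteq> z'"
  proof -
    have "z - z' = of_int (P * U - Q * R) * (x - x') / ((of_int R * x + of_int U) * (of_int R * x' + of_int U))"
      using zdiff[OF Dne[OF xi] Dne[OF xi'], of "of_int P" "of_int Q"] by (simp add: z_def z'_def)
    also have "\<dots> \<noteq> 0" using det n xx Dne[OF xi] Dne[OF xi'] by simp
    finally show ?thesis by simp
  qed
  have trm: "mark_quot n z z' (s, t) = ereal (of_int (gcd t (int n)) * (real n * Fr x x' (U * s - Q * t) (P * t - R * s)))"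
    if "(s, t) \<noteq> (0, 0)" for s t
    using mark_quot_eq[OF zi zi' that] Fr_transform[OF Dne[OF xi] Dne[OF xi'], of P Q s t] det
    by (simp add: z_def z'_def)
  have inv1: "P * (U * s - Q * t) + Q * (P * t - R * s) = int n * s" for s t
  proof -
    have "P * (U * s - Q * t) + Q * (P * t - R * s) = (P * U - Q * R) * s" by (simp add: algebra_simps)
    thus ?thesis using det by simp
  qed
  have inv2: "R * (U * s - Q * t) + U * (P * t - R * s) = int n * t" for s t
  proof -
    have "R * (U * s - Q * t) + U * (P * t - R * s) = (P * U - Q * R) * t" by (simp add: algebra_simps)
    thus ?thesis using det by simp
  qed
  have upper: "mu_n n z z' \<le> ereal (real n * \<alpha>)"
    unfolding mu_n_def
  proof (rule SUP_least)
    fix p :: "int \<times> int" assume "p \<in> UNIV - {(0, 0)}"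
    then obtain s t where p: "p = (s, t)" "(s, t) \<noteq> (0, 0)" by (cases p) auto
    define a where "a = U * s - Q * t"
    define b where "b = P * t - R * s"
    define g where "g = gcd t (int n)"
    have g0: "g > 0" using n by (simp add: g_def)
    have gn: "g dvd int n" by (simp add: g_def)
    have gt: "g dvd t" by (simp add: g_def)
    have ga: "g dvd a" unfolding a_def using gn gt by (simp add: U_def)
    have gb: "g dvd b" unfolding b_def using gn gt by (simp add: R_def)
    obtain a1 where a1: "a = g * a1" using ga by (auto elim!: dvdE)
    obtain b1 where b1: "b = g * b1" using gb by (auto elim!: dvdE)
    have ab1: "(a1, b1) \<noteq> (0, 0)"
    proof
      assume "(a1, b1) = (0, 0)"
      hence "a = 0" "b = 0" using a1 b1 by auto
      hence "int n * s = 0" "int n * t = 0" using inv1[of s t] inv2[of s t] by (auto simp: a_def b_def)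
      thus False using n p(2) by simp
    qed
    have FF: "Fr x x' a b = Fr x x' a1 b1 / (of_int g)\<^sup>2"
      using Fr_scale[of g x x' a1 b1] g0 a1 b1 by simp
    have "of_int g * (real n * Fr x x' a b) = real n * Fr x x' a1 b1 / of_int g"
      unfolding FF using g0 by (simp add: power2_eq_square field_simps)
    also have "\<dots> \<le> real n * Fr x x' a1 b1"
    proof -
      have "(1::real) \<le> of_int g" using g0 by simp
      moreover have "0 \<le> real n * Fr x x' a1 b1" using Fr_nonneg[of x x' a1 b1] by simp
      ultimately show ?thesis
        using divide_left_mono[of 1 "of_int g" "real n * Fr x x' a1 b1"] by simp
    qed
    also have "\<dots> \<le> real n * \<alpha>" using F1[OF ab1] by (simp add: mult_left_mono)
    finally show "mark_quot n z z' p \<le> ereal (real n * \<alpha>)"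
      using trm[OF p(2)] p(1) by (simp add: a_def b_def g_def)
  qed
  have lowy: "ereal (real n * y) \<le> mu_n n z z'" if yl: "y < \<alpha>" for y
  proof -
    obtain a b where ab: "coprime a b" "(a mod int n, b mod int n) = c" "y < Fr x x' a b"
      using c yl by blast
    have "a mod int n = a0 mod int n" "b mod int n = b0 mod int n" using ab(2) ab0(2) by auto
    hence "int n dvd a - a0" "int n dvd b - b0" by (simp_all add: mod_eq_dvd_iff)
    hence "int n dvd (a - a0) * b0 - (b - b0) * a0" by simp
    hence "int n dvd a * P + b * Q" by (simp add: P_def Q_def algebra_simps)
    then obtain s where s: "a * P + b * Q = int n * s" by (auto elim!: dvdE)
    define t where "t = a * r' + b * u'"
    have Us: "U * s = u' * (a * P + b * Q)" unfolding s U_def by simp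
    have Rs: "R * s = r' * (a * P + b * Q)" unfolding s R_def by simp
    have ea: "U * s - Q * t = a"
    proof -
      have "U * s - Q * t = a * (P * u' - Q * r')" unfolding Us t_def by (simp add: algebra_simps)
      thus ?thesis using det1 by simp
    qed
    have eb: "P * t - R * s = b"
    proof -
      have "P * t - R * s = b * (P * u' - Q * r')" unfolding Rs t_def by (simp add: algebra_simps)
      thus ?thesis using det1 by simp
    qed
    have st: "(s, t) \<noteq> (0, 0)"
    proof
      assume "(s, t) = (0, 0)"
      hence "a = 0" "b = 0" using ea eb by auto
      thus False using ab(1) by simp
    qed
    have g1: "(1::real) \<le> of_int (gcd t (int n))" using n
      by (simp add: int_one_le_iff_zero_less)
    have "real n * y \<le> real n * Fr x x' a b" using ab(3) by (simp add: mult_left_mono)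
    also have "\<dots> \<le> of_int (gcd t (int n)) * (real n * Fr x x' a b)"
      using mult_right_mono[OF g1, of "real n * Fr x x' a b"] Fr_nonneg[of x x' a b] by simp
    finally have "ereal (real n * y) \<le> mark_quot n z z' (s, t)"
      using trm[OF st] ea eb by simp
    also have "\<dots> \<le> mu_n n z z'" unfolding mu_n_def using st by (intro SUP_upper) auto
    finally show ?thesis .
  qed
  have muz: "mu_n n z z' = ereal (real n * \<alpha>)"
  proof -
    have "mu_n n z z' \<noteq> -\<infinity>" using lowy[of "\<alpha> - 1"] by auto
    moreover have "mu_n n z z' \<noteq> \<infinity>" using upper by auto
    ultimately obtain m where m: "mu_n n z z' = ereal m" by (cases "mu_n n z z'") auto
    have "m \<le> real n * \<alpha>" using upper m by simp
    moreover have "real n * \<alpha> \<le> m"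
    proof (rule ccontr)
      assume "\<not> real n * \<alpha> \<le> m"
      define y where "y = (\<alpha> + m / real n) / 2"
      have "m / real n < \<alpha>" using \<open>\<not> real n * \<alpha> \<le> m\<close> n by (simp add: divide_less_eq mult.commute)
      have gen: "(al + w) / 2 < al \<and> w < (al + w) / 2" if "w < al" for w al :: real
        using that by auto
      have "y < \<alpha>" "m / real n < y" unfolding y_def using gen[OF \<open>m / real n < \<alpha>\<close>] by auto
      hence "m < real n * y" using n by (simp add: divide_less_eq mult.commute)
      thus False using lowy[OF \<open>y < \<alpha>\<close>] m by simp
    qed
    ultimately show ?thesis using m by simp
  qed
  have "real n * real_of_ereal (mu_n 1 x x') = real_of_ereal (mu_n n z z') \<and> z \<noteq> z' \<and> \<bar>mu_n n z z'\<bar> \<noteq> \<infinity>"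
    using zz muz \<alpha>_def by simp
  thus ?thesis unfolding markoff_spectrum_n_def mem_Collect_eq by metis
qed

definition lq :: "nat \<Rightarrow> real \<Rightarrow> rat \<Rightarrow> real" where
  "lq m x r = (case quotient_of r of (s, t) \<Rightarrow>
     of_int (gcd t (int m)) / ((of_int t)\<^sup>2 * \<bar>of_rat r - x\<bar>))"

lemma lag_quot_lq: "lag_quot m x r = ereal (lq m x r)"
  by (simp add: lag_quot_def lq_def split: prod.split)

lemma lq_nonneg: "lq m x r \<ge> 0"
  by (simp add: lq_def split: prod.split)

lemma lq_frac:
  assumes "t \<noteq> 0"
  obtains t' where "t' * gcd s t = \<bar>t\<bar>"
    "lq m x (of_int s / of_int t) = of_int (gcd t' (int m)) / ((of_int t')\<^sup>2 * \<bar>of_int s / of_int t - x\<bar>)"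
proof -
  obtain s' t' where qq: "quotient_of (of_int s / of_int t) = (s', t')"
    by (cases "quotient_of (of_int s / of_int t)")
  have "t' * gcd s t = \<bar>t\<bar>" using quot_denom[OF assms qq] .
  moreover have "lq m x (of_int s / of_int t) = of_int (gcd t' (int m)) / ((of_int t')\<^sup>2 * \<bar>of_int s / of_int t - x\<bar>)"
    unfolding lq_def qq by (simp add: of_rat_divide)
  ultimately show ?thesis using that by blast
qed

lemma gen_div:
  fixes s t z A D :: real
  assumes "t \<noteq> 0" "D \<noteq> 0" "s - t * z = A / D"
  shows "s / t - z = A / (D * t)"
proof -
  have "s / t - z = (s - t * z) / t" using assms(1) by (simp add: field_simps)
  thus ?thesis using assms by simp
qed

lemma core_alg:
  fixes P Q R U s t a b :: int and x :: real
  assumes D: "of_int R * x + of_int U \<noteq> 0" and ea: "a = U * s - Q * t" and eb: "b = P * t - R * s"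
    and det: "P * U - Q * R = int n" and t: "t \<noteq> 0" and b: "b \<noteq> 0"
  shows "of_int s / of_int t - (of_int P * x + of_int Q) / (of_int R * x + of_int U)
           = (of_int a - of_int b * x) / ((of_int R * x + of_int U) * of_int t)"
    and "of_int a / of_int b - x = (of_int a - of_int b * x) / of_int b"
    and "of_int R * (of_int a / of_int b) + of_int U = real n * of_int t / (of_int b :: real)"
proof -
  have "of_int s - of_int t * ((of_int P * x + of_int Q) / (of_int R * x + of_int U))
      = (of_int a - of_int b * x) / (of_int R * x + of_int U)"
    using lin_identity[OF D, of "of_int s" "of_int t" "of_int P" "of_int Q"] by (simp add: ea eb)
  thus "of_int s / of_int t - (of_int P * x + of_int Q) / (of_int R * x + of_int U)
           = (of_int a - of_int b * x) / ((of_int R * x + of_int U) * of_int t)"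
    using t D by (intro gen_div) auto
  show "of_int a / of_int b - x = (of_int a - of_int b * x) / of_int b" using b by (simp add: field_simps)
  have "R * a + U * b = (P * U - Q * R) * t" by (simp add: ea eb algebra_simps)
  hence "R * a + U * b = int n * t" using det by simp
  hence "of_int R * of_int a + of_int U * of_int b = (real n * of_int t :: real)"
    by (metis of_int_add of_int_mult of_int_of_nat_eq)
  thus "of_int R * (of_int a / of_int b) + of_int U = real n * of_int t / (of_int b :: real)"
    using b by (simp add: field_simps)
qed

lemma final_ineq:
  fixes g G n t A D b b' :: real
  assumes "1 \<le> g" "g \<le> G" "n > 0" "t \<noteq> 0" "A \<noteq> 0" "D \<noteq> 0" "b \<noteq> 0" "b' * G = \<bar>b\<bar>"
  shows "g / (t\<^sup>2 * \<bar>A / (D * t)\<bar>) \<le> n * (1 / (b'\<^sup>2 * \<bar>A / b\<bar>)) * (\<bar>D\<bar> / \<bar>n * t / b\<bar>)"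
proof -
  have G0: "G > 0" using assms by linarith
  have b'e: "b' = \<bar>b\<bar> / G" using assms(8) G0 by (simp add: field_simps)
  define K where "K = \<bar>D\<bar> / (\<bar>t\<bar> * \<bar>A\<bar>)"
  have K0: "K \<ge> 0" unfolding K_def by simp
  have l: "g / (t\<^sup>2 * \<bar>A / (D * t)\<bar>) = g * K"
    unfolding K_def using assms by (simp add: abs_mult abs_divide power2_eq_square field_simps)
  have r: "n * (1 / (b'\<^sup>2 * \<bar>A / b\<bar>)) * (\<bar>D\<bar> / \<bar>n * t / b\<bar>) = G\<^sup>2 * K"
    unfolding K_def b'e using assms G0 by (simp add: abs_mult abs_divide power2_eq_square field_simps)
  have "g \<le> G\<^sup>2"
  proof -
    have "1 * G \<le> G * G" using assms G0 by (intro mult_right_mono) auto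
    hence "G \<le> G * G" by simp
    thus ?thesis unfolding power2_eq_square using assms(2) by linarith
  qed
  thus ?thesis unfolding l r using K0 by (simp add: mult_right_mono)
qed

lemma lq_upper:
  fixes P Q R U :: int and x :: real and q :: rat
  assumes n: "n > 0" and det: "P * U - Q * R = int n" and nR: "int n dvd R" and nU: "int n dvd U"
    and xi: "x \<notin> \<rat>" and D: "of_int R * x + of_int U \<noteq> 0"
    and Pq: "of_int P - of_int R * q \<noteq> (0::rat)"
  shows "lq n ((of_int P * x + of_int Q) / (of_int R * x + of_int U)) q
     \<le> real n * lq 1 x ((of_int U * q - of_int Q) / (of_int P - of_int R * q))
        * (\<bar>of_int R * x + of_int U\<bar> /
           \<bar>of_int R * of_rat ((of_int U * q - of_int Q) / (of_int P - of_int R * q)) + of_int U\<bar>)"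
proof -
  obtain s t where st: "quotient_of q = (s, t)" by (cases "quotient_of q")
  have t0: "t > 0" using quotient_of_denom_pos[OF st] .
  have qst: "q = of_int s / of_int t" using quotient_of_div[OF st] .
  define a where "a = U * s - Q * t"
  define b where "b = P * t - R * s"
  have bq: "(of_int b :: rat) = of_int t * (of_int P - of_int R * q)"
    unfolding qst b_def using t0 by (simp add: field_simps)
  have b0: "b \<noteq> 0" using bq Pq t0 by (metis mult_eq_0_iff of_int_0_eq_iff less_irrefl)
  have rab: "(of_int U * q - of_int Q) / (of_int P - of_int R * q) = of_int a / (of_int b :: rat)"
    unfolding bq unfolding qst a_def using t0 Pq[unfolded qst] by (simp add: field_simps)
  obtain b' where b': "b' * gcd a b = \<bar>b\<bar>"
    and lqr: "lq 1 x (of_int a / of_int b) = of_int (gcd b' (int 1)) / ((of_int b')\<^sup>2 * \<bar>of_int a / of_int b - x\<bar>)"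
    using lq_frac[OF b0] by metis
  have A0: "of_int a - of_int b * x \<noteq> 0" using irr_ne[OF xi] b0 by simp
  note c = core_alg[OF D a_def b_def det _ b0]
  have lqq: "lq n ((of_int P * x + of_int Q) / (of_int R * x + of_int U)) q
      = of_int (gcd t (int n)) / ((of_int t)\<^sup>2 * \<bar>of_int s / of_int t - (of_int P * x + of_int Q) / (of_int R * x + of_int U)\<bar>)"
  proof -
    have "(of_rat q :: real) = of_int s / of_int t" unfolding qst by (simp add: of_rat_divide)
    thus ?thesis unfolding lq_def st by simp
  qed
  have gd: "gcd t (int n) dvd gcd a b"
  proof -
    have "gcd t (int n) dvd U" "gcd t (int n) dvd R" using nU nR by (meson dvd_trans gcd_dvd2)+
    hence "gcd t (int n) dvd a" "gcd t (int n) dvd b" unfolding a_def b_def by simp_all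
    thus ?thesis by simp
  qed
  have g1: "1 \<le> gcd t (int n)" using n by (simp add: int_one_le_iff_zero_less)
  have gG: "gcd t (int n) \<le> gcd a b" using gd b0 by (simp add: zdvd_imp_le)
  have "lq n ((of_int P * x + of_int Q) / (of_int R * x + of_int U)) q
     \<le> real n * (1 / ((of_int b')\<^sup>2 * \<bar>(of_int a - of_int b * x) / of_int b\<bar>)) *
        (\<bar>of_int R * x + of_int U\<bar> / \<bar>real n * of_int t / of_int b\<bar>)"
    unfolding lqq c(1)[OF order.strict_implies_not_eq[OF t0, symmetric]]
    apply (rule final_ineq[where G="of_int (gcd a b)"])
    using g1 gG n t0 A0 D b0 b' by (simp_all flip: of_int_mult of_int_abs)
  also have "\<dots> = real n * lq 1 x ((of_int U * q - of_int Q) / (of_int P - of_int R * q))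
        * (\<bar>of_int R * x + of_int U\<bar> /
           \<bar>of_int R * of_rat ((of_int U * q - of_int Q) / (of_int P - of_int R * q)) + of_int U\<bar>)"
  proof -
    have e: "(of_rat (of_int a / of_int b) :: real) = of_int a / of_int b" by (simp add: of_rat_divide)
    have c2: "\<bar>of_int a / of_int b - x\<bar> = \<bar>of_int a - of_int b * x\<bar> / \<bar>of_int b\<bar>"
        unfolding c(2)[OF order.strict_implies_not_eq[OF t0, symmetric]] by (simp add: abs_divide)
    show ?thesis
      unfolding rab lqr e c2 c(3)[OF order.strict_implies_not_eq[OF t0, symmetric]]
      using b0 by (simp add: abs_divide)
  qed
  finally show ?thesis .
qed

lemma final_ineq2:
  fixes g n t A D b :: real
  assumes "1 \<le> g" "n > 0" "t \<noteq> 0" "A \<noteq> 0" "D \<noteq> 0" "b \<noteq> 0"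
  shows "n * (1 / (b\<^sup>2 * \<bar>A / b\<bar>)) * (\<bar>D\<bar> / \<bar>n * t / b\<bar>) \<le> g / (t\<^sup>2 * \<bar>A / (D * t)\<bar>)"
proof -
  define K where "K = \<bar>D\<bar> / (\<bar>t\<bar> * \<bar>A\<bar>)"
  have K0: "K \<ge> 0" unfolding K_def by simp
  have l: "g / (t\<^sup>2 * \<bar>A / (D * t)\<bar>) = g * K"
    unfolding K_def using assms by (simp add: abs_mult abs_divide power2_eq_square field_simps)
  have r: "n * (1 / (b\<^sup>2 * \<bar>A / b\<bar>)) * (\<bar>D\<bar> / \<bar>n * t / b\<bar>) = K"
    unfolding K_def using assms by (simp add: abs_mult abs_divide power2_eq_square field_simps)
  show ?thesis unfolding l r using K0 assms(1) mult_right_mono[OF assms(1) K0] by simp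
qed

lemma lq_lower:
  fixes P Q R U r' u' a b :: int and x :: real and r :: rat
  assumes n: "n > 0" and det1: "P * u' - Q * r' = 1" and Rd: "R = int n * r'" and Ud: "U = int n * u'"
    and xi: "x \<notin> \<rat>" and D: "of_int R * x + of_int U \<noteq> 0"
    and qr: "quotient_of r = (a, b)" and dv: "int n dvd a * P + b * Q"
    and Rr: "of_int R * r + of_int U \<noteq> (0::rat)"
  shows "real n * lq 1 x r * (\<bar>of_int R * x + of_int U\<bar> / \<bar>of_int R * of_rat r + of_int U\<bar>)
     \<le> lq n ((of_int P * x + of_int Q) / (of_int R * x + of_int U))
            ((of_int P * r + of_int Q) / (of_int R * r + of_int U))"
proof -
  have b0: "b > 0" using quotient_of_denom_pos[OF qr] .
  have cop: "coprime a b" using quotient_of_coprime[OF qr] .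
  have rab: "r = of_int a / of_int b" using quotient_of_div[OF qr] .
  obtain s where s: "a * P + b * Q = int n * s" using dv by (auto elim!: dvdE)
  define t where "t = a * r' + b * u'"
  have det: "P * U - Q * R = int n"
  proof -
    have "P * U - Q * R = int n * (P * u' - Q * r')" by (simp add: Ud Rd algebra_simps)
    thus ?thesis using det1 by simp
  qed
  have Us: "U * s = u' * (a * P + b * Q)" unfolding s Ud by simp
  have Rs: "R * s = r' * (a * P + b * Q)" unfolding s Rd by simp
  have ea: "a = U * s - Q * t"
  proof -
    have "U * s - Q * t = a * (P * u' - Q * r')" unfolding Us t_def by (simp add: algebra_simps)
    thus ?thesis using det1 by simp
  qed
  have eb: "b = P * t - R * s"
  proof -
    have "P * t - R * s = b * (P * u' - Q * r')" unfolding Rs t_def by (simp add: algebra_simps)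
    thus ?thesis using det1 by simp
  qed
  have RaUb: "R * a + U * b = int n * t" unfolding Rd Ud t_def by (simp add: algebra_simps)
  have Rr2: "(of_int R * r + of_int U :: rat) = of_int (int n * t) / of_int b"
    unfolding rab using b0 RaUb[symmetric] by (simp add: field_simps flip: of_int_mult of_int_add)
  have t0: "t \<noteq> 0" using Rr Rr2 by auto
  have qst: "(of_int P * r + of_int Q) / (of_int R * r + of_int U) = of_int s / (of_int t :: rat)"
  proof -
    have "(of_int P * r + of_int Q :: rat) = of_int (a * P + b * Q) / of_int b"
      unfolding rab using b0 by (simp add: field_simps)
    thus ?thesis unfolding Rr2 s using b0 t0 n by (simp add: field_simps)
  qed
  have gst: "gcd s t = 1"
  proof -
    have "gcd s t dvd a" "gcd s t dvd b" unfolding ea eb by simp_all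
    hence "gcd s t dvd gcd a b" by (rule gcd_greatest)
    moreover have g1: "gcd a b = 1" using cop by (simp add: coprime_iff_gcd_eq_1)
    ultimately have "gcd s t dvd 1" by metis
    hence "\<bar>gcd s t\<bar> = 1" by (simp only: zdvd1_eq)
    thus ?thesis using gcd_ge_0_int[of s t] by linarith
  qed
  define z where "z = (of_int P * x + of_int Q) / (of_int R * x + of_int U)"
  obtain t' where t': "t' * gcd s t = \<bar>t\<bar>"
    and lqq: "lq n z (of_int s / of_int t) = of_int (gcd t' (int n)) / ((of_int t')\<^sup>2 * \<bar>of_int s / of_int t - z\<bar>)"
    using lq_frac[OF t0] by metis
  have tt: "(of_int t' :: real)\<^sup>2 = (of_int t)\<^sup>2" using t' gst by simp
  have bne: "b \<noteq> 0" using b0 by simp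
  have e: "(of_rat r :: real) = of_int a / of_int b" unfolding rab by (simp add: of_rat_divide)
  have lqr: "lq 1 x r = 1 / ((of_int b)\<^sup>2 * \<bar>of_int a / of_int b - x\<bar>)"
    unfolding lq_def qr e by simp
  note c = core_alg[OF D ea eb det t0 bne]
  have c2: "\<bar>of_int a / of_int b - x\<bar> = \<bar>(of_int a - of_int b * x) / of_int b\<bar>"
    unfolding c(2) ..
  have A0: "of_int a - of_int b * x \<noteq> 0" using irr_ne[OF xi] bne by simp
  have g1: "(1::real) \<le> of_int (gcd t' (int n))" using n by (simp add: int_one_le_iff_zero_less)
  show ?thesis
    unfolding qst lqq lqr c2 e c(3) tt z_def[symmetric] c(1)[folded z_def]
    by (rule final_ineq2[OF g1]) (use n t0 A0 D bne in simp_all)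
qed

lemma avg_between:
  fixes a b :: real
  assumes "a < b" shows "a < (a + b) / 2" "(a + b) / 2 < b"
  using assms by auto

lemma lagrange_part:
  assumes n: "n > 0" and xi: "x \<notin> \<rat>" and fin: "\<bar>lambda_n 1 x\<bar> \<noteq> \<infinity>"
  shows "real n * real_of_ereal (lambda_n 1 x) \<in> lagrange_spectrum_n n"
proof -
  define \<alpha> where "\<alpha> = real_of_ereal (lambda_n 1 x)"
  have lam: "lambda_n 1 x = ereal \<alpha>" using fin unfolding \<alpha>_def by (cases "lambda_n 1 x") auto
  define Fx where "Fx = filtercomap real_of_rat (at x)"
  have lqe: "lag_quot m y = (\<lambda>r. ereal (lq m y r))" for m y by (rule ext) (rule lag_quot_lq)
  have lamF: "Limsup Fx (\<lambda>r. ereal (lq 1 x r)) = ereal \<alpha>"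
    using lam unfolding lambda_n_def Fx_def lqe .
  have freq: "frequently (\<lambda>r. y < lq 1 x r) Fx" if "y < \<alpha>" for y
  proof (rule ccontr)
    assume "\<not> ?thesis"
    hence "eventually (\<lambda>r. lq 1 x r \<le> y) Fx" by (simp add: not_frequently not_less)
    hence "Limsup Fx (\<lambda>r. ereal (lq 1 x r)) \<le> ereal y" by (intro Limsup_bounded) (auto elim: eventually_mono)
    thus False using lamF that by simp
  qed
  define cls where "cls r = (fst (quotient_of r) mod int n, snd (quotient_of r) mod int n)" for r
  have "\<exists>c. \<forall>y<\<alpha>. frequently (\<lambda>r. y < lq 1 x r \<and> cls r = c) Fx"
  proof (rule ccontr)
    assume "\<not> ?thesis"
    hence "\<forall>c. \<exists>y<\<alpha>. eventually (\<lambda>r. \<not> (y < lq 1 x r \<and> cls r = c)) Fx"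
      by (simp add: not_frequently)
    then obtain yf where yf1: "\<And>c. yf c < \<alpha>"
      and yf2: "\<And>c. eventually (\<lambda>r. \<not> (yf c < lq 1 x r \<and> cls r = c)) Fx"
      by metis
    define C where "C = {0..<int n} \<times> {0..<int n}"
    define Y where "Y = Max (yf ` C)"
    have finC: "finite C" unfolding C_def by simp
    have neC: "C \<noteq> {}" using n unfolding C_def by auto
    have "Y < \<alpha>" unfolding Y_def using finC neC yf1 by (subst Max_less_iff) auto
    have "eventually (\<lambda>r. \<forall>c\<in>C. \<not> (yf c < lq 1 x r \<and> cls r = c)) Fx"
      using finC yf2 by (intro eventually_ball_finite) auto
    hence ev: "eventually (\<lambda>r. lq 1 x r \<le> Y) Fx"
    proof (rule eventually_mono)
      fix r assume h: "\<forall>c\<in>C. \<not> (yf c < lq 1 x r \<and> cls r = c)"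
      have cC: "cls r \<in> C" unfolding cls_def C_def using n by auto
      hence "lq 1 x r \<le> yf (cls r)" using h by force
      moreover have "yf (cls r) \<le> Y" unfolding Y_def using cC finC by (intro Max_ge) auto
      ultimately show "lq 1 x r \<le> Y" by linarith
    qed
    have "frequently (\<lambda>r. Y < lq 1 x r) Fx" using freq \<open>Y < \<alpha>\<close> .
    hence "frequently (\<lambda>r. Y < lq 1 x r \<and> lq 1 x r \<le> Y) Fx"
      using ev by (rule frequently_eventually_frequently)
    hence "frequently (\<lambda>r. False) Fx" by (rule frequently_elim1) linarith
    thus False by simp
  qed
  then obtain c where c: "\<And>y. y < \<alpha> \<Longrightarrow> frequently (\<lambda>r. y < lq 1 x r \<and> cls r = c) Fx" by blast
  obtain r0 where "cls r0 = c" using frequently_ex[OF c[of "\<alpha> - 1"]] by auto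
  obtain a0 b0 where qr0: "quotient_of r0 = (a0, b0)" by (cases "quotient_of r0")
  have ab0: "coprime a0 b0" "(a0 mod int n, b0 mod int n) = c"
    using quotient_of_coprime[OF qr0] \<open>cls r0 = c\<close> qr0 by (auto simp: cls_def)
  have "gcd b0 a0 = 1" using ab0(1) by (simp add: coprime_iff_gcd_eq_1 gcd.commute)
  then obtain u' r' where bez: "u' * b0 + r' * a0 = 1"
    using bezout_int[of b0 a0] by auto
  define P where "P = b0"
  define Q where "Q = - a0"
  define R where "R = int n * r'"
  define U where "U = int n * u'"
  have det1: "P * u' - Q * r' = 1" using bez by (simp add: P_def Q_def algebra_simps)
  have det: "P * U - Q * R = int n"
  proof -
    have "P * U - Q * R = int n * (P * u' - Q * r')" by (simp add: U_def R_def algebra_simps)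
    thus ?thesis using det1 by simp
  qed
  have nR: "int n dvd R" and nU: "int n dvd U" by (simp_all add: R_def U_def)
  have UR: "(U, - R) \<noteq> (0, 0)"
  proof
    assume "(U, - R) = (0, 0)"
    hence "u' = 0" "r' = 0" using n by (auto simp: U_def R_def)
    thus False using det1 by simp
  qed
  have D0: "of_int R * x + of_int U \<noteq> 0"
    using irr_ne[OF xi UR] by (simp add: algebra_simps)
  define z where "z = (of_int P * x + of_int Q) / (of_int R * x + of_int U)"
  have zi: "z \<notin> \<rat>" using zeta_irr[OF xi D0] det n by (simp add: z_def)
  define Fz where "Fz = filtercomap real_of_rat (at z)"
  have Pz: "of_int P - of_int R * z \<noteq> 0"
  proof -
    have "(of_int P - of_int R * z) * (of_int R * x + of_int U) = of_int P * of_int U - of_int Q * (of_int R :: real)"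
      unfolding z_def using D0 by (simp add: field_simps)
    also have "\<dots> = real n" using det by (metis of_int_diff of_int_mult of_int_of_nat_eq)
    finally show ?thesis using n by auto
  qed
  have hz: "(of_int U * z - of_int Q) / (of_int P - of_int R * z) = x"
  proof -
    have "(of_int U * z - of_int Q) * (of_int R * x + of_int U) = x * ((of_int P - of_int R * z) * (of_int R * x + of_int U))"
      unfolding z_def using D0 by (simp add: field_simps)
    hence "of_int U * z - of_int Q = x * (of_int P - of_int R * z)" using D0 by simp
    thus ?thesis using Pz by simp
  qed
  have h_tend: "((\<lambda>v. (of_int U * v - of_int Q) / (of_int P - of_int R * v)) \<longlongrightarrow> x) (at z)"
  proof -
    have "((\<lambda>v. (of_int U * v - of_int Q) / (of_int P - of_int R * v)) \<longlongrightarrow>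
        (of_int U * z - of_int Q) / (of_int P - of_int R * z)) (at z)"
      using Pz by (intro tendsto_intros) auto
    thus ?thesis unfolding hz .
  qed
  have m_tend: "((\<lambda>y. (of_int P * y + of_int Q) / (of_int R * y + of_int U)) \<longlongrightarrow> z) (at x)"
    unfolding z_def using D0 by (intro tendsto_intros) auto
  have rho_tend: "((\<lambda>y. \<bar>of_int R * x + of_int U\<bar> / \<bar>of_int R * y + of_int U\<bar>) \<longlongrightarrow> 1) (at x)"
  proof -
    have "((\<lambda>y. \<bar>of_int R * x + of_int U\<bar> / \<bar>of_int R * y + of_int U\<bar>) \<longlongrightarrow>
        \<bar>of_int R * x + of_int U\<bar> / \<bar>of_int R * x + of_int U\<bar>) (at x)"
      using D0 by (intro tendsto_intros) auto
    thus ?thesis using D0 by simp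
  qed
  have Dev: "eventually (\<lambda>y. of_int R * y + of_int U \<noteq> (0::real)) (at x)"
  proof -
    have "((\<lambda>y. of_int R * y + of_int U) \<longlongrightarrow> of_int R * x + (of_int U :: real)) (at x)"
      by (intro tendsto_intros)
    thus ?thesis using D0 by (rule tendsto_imp_eventually_ne)
  qed
  have Pev: "eventually (\<lambda>v. of_int P - of_int R * v \<noteq> (0::real)) (at z)"
  proof -
    have "((\<lambda>v. of_int P - of_int R * v) \<longlongrightarrow> of_int P - of_int R * (z :: real)) (at z)"
      by (intro tendsto_intros)
    thus ?thesis using Pz by (rule tendsto_imp_eventually_ne)
  qed
  have ratQ: "of_rat q \<noteq> y" if "y \<notin> \<rat>" for q and y :: real
    using that by auto
  have upw: "eventually (\<lambda>q. lq n z q \<le> w) Fz" if w: "real n * \<alpha> < w" for w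
  proof -
    have aw: "\<alpha> < w / real n" using w n by (simp add: field_simps mult.commute)
    define y' where "y' = (\<alpha> + w / real n) / 2"
    have y'1: "\<alpha> < y'" and y'2: "y' < w / real n" unfolding y'_def using avg_between[OF aw] by auto
    have y'3: "real n * y' < w" using y'2 n by (simp add: field_simps mult.commute)
    define \<rho>0 where "\<rho>0 = (if y' > 0 then w / (real n * y') else 2)"
    have \<rho>01: "1 < \<rho>0" unfolding \<rho>0_def using y'3 n by (auto simp: field_simps)
    have prp: "real n * l * \<rho> \<le> w" if "0 \<le> l" "l < y'" "0 \<le> \<rho>" "\<rho> < \<rho>0" for l \<rho>
    proof -
      have yp: "y' > 0" using that by linarith
      hence r0: "\<rho>0 = w / (real n * y')" unfolding \<rho>0_def by simp
      have "l * \<rho> \<le> y' * \<rho>0" using that yp by (intro mult_mono) auto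
      hence "real n * (l * \<rho>) \<le> real n * (y' * \<rho>0)" by (simp add: mult_left_mono)
      also have "real n * (y' * \<rho>0) = w" unfolding r0 using yp n by (simp add: field_simps)
      finally show ?thesis by (simp add: mult.assoc)
    qed
    have "eventually (\<lambda>r. ereal (lq 1 x r) < ereal y') Fx"
      by (rule Limsup_lessD) (use lamF y'1 in simp)
    hence "eventually (\<lambda>r. lq 1 x r < y') Fx" by simp
    then obtain Q1 where Q1: "eventually Q1 (at x)" "\<And>r. Q1 (of_rat r) \<Longrightarrow> lq 1 x r < y'"
      unfolding Fx_def eventually_filtercomap by blast
    have ev2: "eventually (\<lambda>y. \<bar>of_int R * x + of_int U\<bar> / \<bar>of_int R * y + of_int U\<bar> < \<rho>0) (at x)"
      using order_tendstoD(2)[OF rho_tend \<rho>01] .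
    define Q2 where "Q2 y = (Q1 y \<and> \<bar>of_int R * x + of_int U\<bar> / \<bar>of_int R * y + of_int U\<bar> < \<rho>0)" for y
    have "eventually Q2 (at x)" unfolding Q2_def using Q1(1) ev2 by (rule eventually_conj)
    hence "eventually (\<lambda>y. y \<noteq> x \<longrightarrow> Q2 y) (nhds x)" by (simp add: eventually_at_filter)
    hence ev4: "eventually (\<lambda>v. (of_int U * v - of_int Q) / (of_int P - of_int R * v) \<noteq> x \<longrightarrow>
                  Q2 ((of_int U * v - of_int Q) / (of_int P - of_int R * v))) (at z)"
      using h_tend unfolding filterlim_iff by blast
    define Q3 where "Q3 v = (((of_int U * v - of_int Q) / (of_int P - of_int R * v) \<noteq> x \<longrightarrow>
                  Q2 ((of_int U * v - of_int Q) / (of_int P - of_int R * v))) \<and> of_int P - of_int R * v \<noteq> (0::real))" for v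
    have ev5: "eventually Q3 (at z)" unfolding Q3_def using ev4 Pev by (rule eventually_conj)
    show ?thesis unfolding Fz_def eventually_filtercomap
    proof (intro exI[of _ Q3] conjI allI impI)
      show "eventually Q3 (at z)" by (rule ev5)
      fix q assume hq: "Q3 (of_rat q)"
      have e1: "(of_rat (of_int P - of_int R * q) :: real) = of_int P - of_int R * of_rat q"
        by (simp add: of_rat_diff of_rat_mult)
      have Pq: "of_int P - of_int R * q \<noteq> (0::rat)"
      proof
        assume "of_int P - of_int R * q = (0::rat)"
        hence "(of_int P - of_int R * of_rat q :: real) = 0" unfolding e1[symmetric] by simp
        thus False using hq unfolding Q3_def by simp
      qed
      define r where "r = (of_int U * q - of_int Q) / (of_int P - of_int R * q)"
      have hr: "(of_int U * of_rat q - of_int Q) / (of_int P - of_int R * of_rat q) = (of_rat r :: real)"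
        unfolding r_def by (simp add: of_rat_divide of_rat_diff of_rat_mult)
      have "(of_rat r :: real) \<noteq> x" using xi by (metis Rats_of_rat)
      hence q2: "Q2 (of_rat r)" using hq unfolding Q3_def hr by simp
      have "lq n z q \<le> real n * lq 1 x r * (\<bar>of_int R * x + of_int U\<bar> / \<bar>of_int R * of_rat r + of_int U\<bar>)"
        unfolding z_def r_def by (rule lq_upper[OF n det nR nU xi D0 Pq])
      also have "\<dots> \<le> w"
        using q2 Q1(2)[of r] unfolding Q2_def by (intro prp lq_nonneg) auto
      finally show "lq n z q \<le> w" .
    qed
  qed
  have low: "\<not> eventually (\<lambda>q. lq n z q < w) Fz" if w: "w < real n * \<alpha>" for w
  proof
    assume evw: "eventually (\<lambda>q. lq n z q < w) Fz"
    obtain y' \<rho>1 where y'\<alpha>: "y' < \<alpha>" and \<rho>11: "\<rho>1 < 1"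
      and prp: "\<And>l \<rho>. y' < l \<Longrightarrow> \<rho>1 < \<rho> \<Longrightarrow> 0 \<le> l \<Longrightarrow> 0 \<le> \<rho> \<Longrightarrow> w \<le> real n * l * \<rho>"
    proof (cases "w < 0")
      case True
      show ?thesis
      proof (rule that[of "\<alpha> - 1" 0])
        fix l \<rho> :: real assume h: "\<alpha> - 1 < l" "0 < \<rho>" "0 \<le> l" "0 \<le> \<rho>"
        have "0 \<le> real n * l * \<rho>" using h by simp
        thus "w \<le> real n * l * \<rho>" using True by linarith
      qed auto
    next
      case False
      have aw: "w / real n < \<alpha>" using w n by (simp add: field_simps mult.commute)
      define y' where "y' = (w / real n + \<alpha>) / 2"
      have y'1: "w / real n < y'" and y'2: "y' < \<alpha>" unfolding y'_def using avg_between[OF aw] by auto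
      have wn0: "0 \<le> w / real n" using False n by simp
      have yp: "y' > 0" using y'1 wn0 by linarith
      have y'3: "w < real n * y'" using y'1 n by (simp add: field_simps mult.commute)
      define \<rho>1 where "\<rho>1 = w / (real n * y')"
      have r1: "\<rho>1 < 1" unfolding \<rho>1_def using y'3 yp n by (simp add: field_simps)
      have r0: "0 \<le> \<rho>1" unfolding \<rho>1_def using False yp n by simp
      show ?thesis
      proof (rule that[OF y'2 r1])
        fix l \<rho> :: real assume h: "y' < l" "\<rho>1 < \<rho>" "0 \<le> l" "0 \<le> \<rho>"
        have "y' * \<rho>1 \<le> l * \<rho>" using h r0 by (intro mult_mono) auto
        hence "real n * (y' * \<rho>1) \<le> real n * (l * \<rho>)" by (simp add: mult_left_mono)
        moreover have "real n * (y' * \<rho>1) = w" unfolding \<rho>1_def using yp n by (simp add: field_simps)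
        ultimately show "w \<le> real n * l * \<rho>" by (simp add: mult.assoc)
      qed
    qed
    obtain Q3 where Q3: "eventually Q3 (at z)" "\<And>q. Q3 (of_rat q) \<Longrightarrow> lq n z q < w"
      using evw unfolding Fz_def eventually_filtercomap by blast
    have "eventually (\<lambda>v. v \<noteq> z \<longrightarrow> Q3 v) (nhds z)" using Q3(1) by (simp add: eventually_at_filter)
    hence e1: "eventually (\<lambda>y. (of_int P * y + of_int Q) / (of_int R * y + of_int U) \<noteq> z \<longrightarrow>
                 Q3 ((of_int P * y + of_int Q) / (of_int R * y + of_int U))) (at x)"
      using m_tend unfolding filterlim_iff by blast
    have e2: "eventually (\<lambda>y. \<rho>1 < \<bar>of_int R * x + of_int U\<bar> / \<bar>of_int R * y + of_int U\<bar>) (at x)"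
      using order_tendstoD(1)[OF rho_tend \<rho>11] .
    define Q4 where "Q4 y = (((of_int P * y + of_int Q) / (of_int R * y + of_int U) \<noteq> z \<longrightarrow>
                 Q3 ((of_int P * y + of_int Q) / (of_int R * y + of_int U))) \<and>
                 \<rho>1 < \<bar>of_int R * x + of_int U\<bar> / \<bar>of_int R * y + of_int U\<bar> \<and>
                 of_int R * y + of_int U \<noteq> (0::real))" for y
    have e3: "eventually Q4 (at x)" unfolding Q4_def using e1 e2 Dev by (intro eventually_conj)
    have e4: "eventually (\<lambda>r. Q4 (of_rat r)) Fx" unfolding Fx_def eventually_filtercomap
      using e3 by blast
    have "frequently (\<lambda>r. (y' < lq 1 x r \<and> cls r = c) \<and> Q4 (of_rat r)) Fx"
      using frequently_eventually_frequently[OF c[OF y'\<alpha>] e4] .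
    then obtain r where hr: "y' < lq 1 x r" "cls r = c" "Q4 (of_rat r)" using frequently_ex by blast
    obtain a b where qr: "quotient_of r = (a, b)" by (cases "quotient_of r")
    have "(a mod int n, b mod int n) = c" using hr(2) qr by (simp add: cls_def)
    hence "a mod int n = a0 mod int n" "b mod int n = b0 mod int n" using ab0(2) by auto
    hence "int n dvd a - a0" "int n dvd b - b0" by (simp_all add: mod_eq_dvd_iff)
    hence "int n dvd (a - a0) * b0 - (b - b0) * a0" by simp
    hence dv: "int n dvd a * P + b * Q" by (simp add: P_def Q_def algebra_simps)
    have e5: "(of_rat (of_int R * r + of_int U) :: real) = of_int R * of_rat r + of_int U"
      by (simp add: of_rat_add of_rat_mult)
    have Rr: "of_int R * r + of_int U \<noteq> (0::rat)"
    proof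
      assume "of_int R * r + of_int U = (0::rat)"
      hence "(of_int R * of_rat r + of_int U :: real) = 0" unfolding e5[symmetric] by simp
      thus False using hr(3) unfolding Q4_def by simp
    qed
    define q where "q = (of_int P * r + of_int Q) / (of_int R * r + of_int U)"
    have mq: "(of_int P * of_rat r + of_int Q) / (of_int R * of_rat r + of_int U) = (of_rat q :: real)"
      unfolding q_def by (simp add: of_rat_divide of_rat_add of_rat_mult)
    have "(of_rat q :: real) \<noteq> z" using zi by (metis Rats_of_rat)
    hence "Q3 (of_rat q)" using hr(3) unfolding Q4_def mq by simp
    hence lt: "lq n z q < w" by (rule Q3(2))
    have "real n * lq 1 x r * (\<bar>of_int R * x + of_int U\<bar> / \<bar>of_int R * of_rat r + of_int U\<bar>) \<le> lq n z q"
      unfolding z_def q_def by (rule lq_lower[OF n det1 R_def U_def xi D0 qr dv Rr])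
    moreover have "w \<le> real n * lq 1 x r * (\<bar>of_int R * x + of_int U\<bar> / \<bar>of_int R * of_rat r + of_int U\<bar>)"
      using hr(1,3) unfolding Q4_def by (intro prp lq_nonneg) auto
    ultimately show False using lt by linarith
  qed
  have LS: "lambda_n n z = ereal (real n * \<alpha>)"
  proof -
    have L: "lambda_n n z = Limsup Fz (\<lambda>q. ereal (lq n z q))" unfolding lambda_n_def Fz_def lqe ..
    have le: "Limsup Fz (\<lambda>q. ereal (lq n z q)) \<le> ereal (real n * \<alpha>)"
      unfolding Limsup_le_iff
    proof (intro allI impI)
      fix y :: ereal assume y: "ereal (real n * \<alpha>) < y"
      show "eventually (\<lambda>q. ereal (lq n z q) < y) Fz"
      proof (cases y)
        case (real w)
        hence nw: "real n * \<alpha> < w" using y by simp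
        define w' where "w' = (real n * \<alpha> + w) / 2"
        have "real n * \<alpha> < w'" "w' < w" unfolding w'_def using avg_between[OF nw] by auto
        show ?thesis using upw[OF \<open>real n * \<alpha> < w'\<close>]
          by (rule eventually_mono) (use \<open>w' < w\<close> real in auto)
      next
        case PInf thus ?thesis by simp
      next
        case MInf thus ?thesis using y by simp
      qed
    qed
    have ge: "ereal (real n * \<alpha>) \<le> Limsup Fz (\<lambda>q. ereal (lq n z q))"
    proof (rule ccontr)
      assume "\<not> ?thesis"
      hence "Limsup Fz (\<lambda>q. ereal (lq n z q)) < ereal (real n * \<alpha>)" by simp
      then obtain e where e: "Limsup Fz (\<lambda>q. ereal (lq n z q)) < e" "e < ereal (real n * \<alpha>)"
        using dense by blast
      then obtain w where w: "e = ereal w"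
        by (cases e) auto
      have "eventually (\<lambda>q. ereal (lq n z q) < e) Fz" by (rule Limsup_lessD[OF e(1)])
      hence "eventually (\<lambda>q. lq n z q < w) Fz" using w by simp
      thus False using low[of w] e(2) w by simp
    qed
    show ?thesis using L le ge by simp
  qed
  have "real n * real_of_ereal (lambda_n 1 x) = real_of_ereal (lambda_n n z) \<and> z \<notin> \<rat> \<and> \<bar>lambda_n n z\<bar> \<noteq> \<infinity>"
    using LS zi \<alpha>_def by simp
  thus ?thesis unfolding lagrange_spectrum_n_def mem_Collect_eq by metis
qed

theorem proposition3p8:
  fixes n :: nat
  assumes "n > 0"
  shows "(\<lambda>a. real n * a) ` lagrange_spectrum_n 1 \<subseteq> lagrange_spectrum_n n
       \<and> (\<lambda>a. real n * a) ` markoff_spectrum_n 1 \<subseteq> markoff_spectrum_n n"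
proof
  show "(\<lambda>a. real n * a) ` lagrange_spectrum_n 1 \<subseteq> lagrange_spectrum_n n"
  proof
    fix v assume "v \<in> (\<lambda>a. real n * a) ` lagrange_spectrum_n 1"
    then obtain x where x: "x \<notin> \<rat>" "\<bar>lambda_n 1 x\<bar> \<noteq> \<infinity>" "v = real n * real_of_ereal (lambda_n 1 x)"
      unfolding lagrange_spectrum_n_def by auto
    show "v \<in> lagrange_spectrum_n n" unfolding x(3) by (rule lagrange_part[OF assms x(1,2)])
  qed
  show "(\<lambda>a. real n * a) ` markoff_spectrum_n 1 \<subseteq> markoff_spectrum_n n"
  proof
    fix v assume "v \<in> (\<lambda>a. real n * a) ` markoff_spectrum_n 1"
    then obtain x x' where x: "x \<noteq> x'" "\<bar>mu_n 1 x x'\<bar> \<noteq> \<infinity>" "v = real n * real_of_ereal (mu_n 1 x x')"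
      unfolding markoff_spectrum_n_def by auto
    show "v \<in> markoff_spectrum_n n" unfolding x(3) by (rule markoff_part[OF assms x(1,2)])
  qed
qed

end
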